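(* Let $a$ and $b$ be coprime odd integers, let $\beta$ be a non-negative integer, and let $c$ and $d$ be odd positive integers. Then: 1) If $cd\in G_{(a,b)}(\beta)$, then $c\in G_{(a,b)}(\beta)$ and $d\in G_{(a,b)}(\beta)$. 2) If $\beta\geq2$, then $cd\in G_{(a,b)}(\beta)$ if and only if $c\in G_{(a,b)}(\beta)$ and $d\in G_{(a,b)}(\beta)$.
   Context: For coprime nonzero integers $a,b$ and an integer $\beta\geq0$, $G_{(a,b)}(\beta)$ is the set of positive integers $d$ such that $2^\beta d\mid(a^k+b^k)$ for some positive integer $k$. *)

theory Defs
  imports Main
begin

definition G :: "int \<Rightarrow> int \<Rightarrow> nat \<Rightarrow> int set" where
  "G a b \<beta> = {d. d > 0 \<and> (\<exists>k::nat. k > 0 \<and> (2 ^ \<beta> * d) dvd (a ^ k + b ^ k))}"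

end

theory Submission
  imports Defs "HOL-Number_Theory.Cong"
begin

lemma oddsum_fact:
  fixes x y :: int
  assumes "odd n"
  shows "x^n + y^n = (x+y) * (\<Sum>i<n. (-y)^(n - Suc i) * x^i)"
proof -
  have "x^n - (-y)^n = (x - (-y)) * (\<Sum>i<n. (-y)^(n - Suc i) * x^i)"
    by (rule power_diff_sumr2)
  moreover have "(-y)^n = - (y^n)" using assms by simp
  ultimately show ?thesis by simp
qed

lemma quot_dvd:
  fixes x y m :: int
  assumes "m dvd x + y" "m dvd int n"
  shows "m dvd (\<Sum>i<n. (-y)^(n - Suc i) * x^i)"
proof -
  have c: "[-y = x] (mod m)"
    using assms(1) unfolding cong_iff_dvd_diff
    by (metis dvd_minus_iff minus_add_distrib diff_conv_add_uminus add.commute)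
  have cg: "[(\<Sum>i<n. (-y)^(n - Suc i) * x^i) = (\<Sum>i<n. x^(n - Suc i) * x^i)] (mod m)"
    by (intro cong_sum cong_mult cong_pow c cong_refl)
  have e: "(\<Sum>i<n. x^(n - Suc i) * x^i) = (\<Sum>i<n. x^(n - 1))"
    by (intro sum.cong refl) (simp add: power_add[symmetric])
  have "m dvd (\<Sum>i<n. x^(n - 1))" using assms(2) by simp
  hence "m dvd (\<Sum>i<n. x^(n - Suc i) * x^i)" unfolding e .
  thus ?thesis using cong_dvd_iff[OF cg] by blast
qed

lemma pow_dvd_odd:
  fixes a b :: int
  assumes "odd k2"
  shows "a^k1 + b^k1 dvd a^(k1*k2) + b^(k1*k2)"
  unfolding power_mult oddsum_fact[OF assms, of "a^k1" "b^k1"] by (rule dvd_triv_left)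

lemma even_not4:
  fixes a b :: int
  assumes "odd a" "odd b" "even k"
  shows "\<not> 4 dvd a^k + b^k"
proof -
  obtain j where k: "k = 2*j" using assms(3) by blast
  have sq: "[z^2 = 1] (mod 4)" if h: "odd (z::int)" for z
  proof -
    obtain t where "z = 2*t+1" using h by (rule oddE)
    hence "z^2 - 1 = 4*(t^2+t)" by (simp add: power2_eq_square algebra_simps)
    thus ?thesis unfolding cong_iff_dvd_diff by simp
  qed
  have "[(a^2)^j = 1^j] (mod 4)" by (intro cong_pow sq assms)
  moreover have "[(b^2)^j = 1^j] (mod 4)" by (intro cong_pow sq assms)
  ultimately have "[(a^2)^j + (b^2)^j = 1^j + 1^j] (mod 4)"
    by (rule cong_add)
  moreover have "a^k = (a^2)^j" "b^k = (b^2)^j" "(1::int)^j + 1^j = 2"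
    unfolding k power_mult by simp_all
  ultimately have "[a^k + b^k = 2] (mod 4)" by simp
  hence "(a^k+b^k) mod 4 = 2" unfolding cong_def by simp
  thus ?thesis unfolding dvd_eq_mod_eq_0 by simp
qed

theorem proposition2p11:
  fixes a b c d :: int and \<beta> :: nat
  assumes "coprime a b" and "odd a" and "odd b"
    and "odd c" and "odd d" and "c > 0" and "d > 0"
  shows "(c * d \<in> G a b \<beta> \<longrightarrow> c \<in> G a b \<beta> \<and> d \<in> G a b \<beta>)
    \<and> (\<beta> \<ge> 2 \<longrightarrow> (c * d \<in> G a b \<beta> \<longleftrightarrow> c \<in> G a b \<beta> \<and> d \<in> G a b \<beta>))"
proof -
  have P1: "c \<in> G a b \<beta> \<and> d \<in> G a b \<beta>" if "c * d \<in> G a b \<beta>"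
  proof -
    have "(\<exists>k::nat. k > 0 \<and> (2 ^ \<beta> * (c*d)) dvd (a ^ k + b ^ k))"
      using that unfolding G_def mem_Collect_eq by blast
    then obtain k where k: "k > 0" "2^\<beta> * (c*d) dvd a^k + b^k" by blast
    have "2^\<beta> * c dvd 2^\<beta> * (c*d)" by simp
    hence "2^\<beta> * c dvd a^k + b^k" using k(2) by (rule dvd_trans)
    moreover have "2^\<beta> * d dvd 2^\<beta> * (c*d)" by simp
    hence "2^\<beta> * d dvd a^k + b^k" using k(2) by (rule dvd_trans)
    ultimately show ?thesis using k(1) assms unfolding G_def mem_Collect_eq by blast
  qed
  have oddk: "odd k" if "\<beta> \<ge> 2" "2^\<beta> * e dvd a^k + b^k" for k e
  proof
    assume "even k"
    have "(4::int) dvd 2^\<beta>"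
      using that(1) le_imp_power_dvd[of 2 \<beta> "2::int"] by simp
    hence "4 dvd 2^\<beta> * e" by (rule dvd_mult2)
    hence "4 dvd a^k + b^k" using that(2) by (rule dvd_trans)
    thus False using even_not4[OF assms(2,3) \<open>even k\<close>] by simp
  qed
  have P2: "c * d \<in> G a b \<beta>" if "\<beta> \<ge> 2" "c \<in> G a b \<beta>" "d \<in> G a b \<beta>"
  proof -
    have "(\<exists>k::nat. k > 0 \<and> (2 ^ \<beta> * c) dvd (a ^ k + b ^ k))"
      using that unfolding G_def mem_Collect_eq by blast
    then obtain k1 where k1: "k1 > 0" "2^\<beta> * c dvd a^k1 + b^k1" by blast
    have "(\<exists>k::nat. k > 0 \<and> (2 ^ \<beta> * d) dvd (a ^ k + b ^ k))"
      using that unfolding G_def mem_Collect_eq by blast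
    then obtain k2 where k2: "k2 > 0" "2^\<beta> * d dvd a^k2 + b^k2" by blast
    have o1: "odd k1" using oddk[OF that(1) k1(2)] .
    have o2: "odd k2" using oddk[OF that(1) k2(2)] .
    define k where "k = k1 * k2"
    define T where "T = a^k + b^k"
    have T1: "2^\<beta> * c dvd T"
      using dvd_trans[OF k1(2) pow_dvd_odd[OF o2]] unfolding T_def k_def .
    have T2': "2^\<beta> * d dvd T"
      using dvd_trans[OF k2(2) pow_dvd_odd[OF o1, of a k2 b]] unfolding T_def k_def
      by (simp only: mult.commute[of k2 k1])
    have T2: "d dvd T" using dvd_mult_right[OF T2'] .
    define n where "n = nat d"
    have dn: "int n = d" using assms(7) unfolding n_def by simp
    have on: "odd n" using assms(5) unfolding dn[symmetric] by simp
    have eq: "a^(k*n) + b^(k*n) = T * (\<Sum>i<n. (-(b^k))^(n - Suc i) * (a^k)^i)"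
      using oddsum_fact[OF on, of "a^k" "b^k"] unfolding T_def by (simp only: power_mult)
    have T2x: "d dvd a^k + b^k" using T2 unfolding T_def .
    have dd: "d dvd int n" using dn by simp
    have "d dvd (\<Sum>i<n. (-(b^k))^(n - Suc i) * (a^k)^i)"
      by (rule quot_dvd[OF T2x dd])
    hence "2^\<beta> * c * d dvd T * (\<Sum>i<n. (-(b^k))^(n - Suc i) * (a^k)^i)"
      using T1 by (rule mult_dvd_mono[rotated])
    hence "2^\<beta> * (c*d) dvd a^(k*n) + b^(k*n)"
      unfolding eq by (simp only: mult.assoc)
    moreover have "k*n > 0" using k1 k2 assms(7) unfolding k_def n_def by simp
    moreover have "c*d > 0" using assms(6,7) by simp
    ultimately show ?thesis unfolding G_def mem_Collect_eq by blast
  qed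
  show ?thesis using P1 P2 by blast
qed

end
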